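(* Assume there exist constants $\beta>1$ and $C_1,C_2>0$ such that $C_1(\log\frac1x)^{\beta-1}dx\le\Lambda(dx)\le C_2(\log\frac1x)^{\beta-1}dx$ on $(0,1)$. Then for every $\delta\in(0,1)$, as $n\to\infty$, $$\sum_{k=\lfloor\delta n\rfloor+1}^n\binom nk\lambda_{n,k}\le\frac{C_2}{\beta}\delta^{-\beta}+O(n^{-1}).$$
   Context: $\Lambda$ is a finite measure on $[0,1]$; for $2\le k\le n$, $\lambda_{n,k}=\int_{[0,1]}x^{k-2}(1-x)^{n-k}\Lambda(dx)$. $\lfloor x\rfloor$ is the integer part of $x$. *)

theory Defs
  imports "HOL-Analysis.Analysis"
begin

definition lam :: "real measure \<Rightarrow> nat \<Rightarrow> nat \<Rightarrow> real" where
  "lam \<Lambda> n k = (LINT x:{0..1}|\<Lambda>. x ^ (k - 2) * (1 - x) ^ (n - k))"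

end

theory Submission imports Defs "HOL-Real_Asymp.Real_Asymp" begin

lemma slope_mono:
  fixes f :: "real \<Rightarrow> real"
  assumes f: "convex_on I f" and I: "x \<in> I" "y \<in> I" "z \<in> I" "w \<in> I"
    and o: "x < y" "y \<le> z" "z < w"
  shows "(f y - f x) / (y - x) \<le> (f w - f z) / (w - z)"
proof -
  have 1: "(f x - f y) / (x - y) \<le> (f x - f w) / (x - w)"
    using convex_on_slope_le(1)[OF f I(1) I(4), of y] o by auto
  have 2: "(f x - f w) / (x - w) \<le> (f y - f w) / (y - w)"
    using convex_on_slope_le(2)[OF f I(1) I(4), of y] o by auto
  have 3: "(f y - f w) / (y - w) \<le> (f z - f w) / (z - w)"
  proof (cases "y = z")
    case False
    then show ?thesis using convex_on_slope_le(2)[OF f I(2) I(4), of z] o by auto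
  qed simp
  have "(f y - f x) / (y - x) = (f x - f y) / (x - y)" by (metis minus_diff_eq minus_divide_divide)
  moreover have "(f w - f z) / (w - z) = (f z - f w) / (z - w)" by (metis minus_diff_eq minus_divide_divide)
  ultimately show ?thesis using 1 2 3 by linarith
qed

lemma Gamma_plus1_real: "(y::real) > 0 \<Longrightarrow> Gamma (y + 1) = y * Gamma y"
  by (rule Gamma_plus1) (auto elim!: nonpos_Ints_cases)

lemma lnGamma_upper:
  fixes a b :: real assumes a: "a > 0" and b: "b > 0"
  shows "ln (Gamma (a + b)) - ln (Gamma a) \<le> b * ln (a + b)"
proof -
  let ?f = "ln \<circ> Gamma :: real \<Rightarrow> real"
  have "(?f (a+b) - ?f a) / ((a+b) - a) \<le> (?f (a+b+1) - ?f (a+b)) / ((a+b+1) - (a+b))"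
    by (rule slope_mono[OF log_convex_Gamma_real]) (use a b in auto)
  also have "?f (a+b+1) - ?f (a+b) = ln (a+b)"
  proof -
    have p: "Gamma (a+b) > 0" "a + b > 0" using a b by auto
    have "Gamma (a+b+1) = (a+b) * Gamma (a+b)" using p(2) by (intro Gamma_plus1_real)
    hence "ln (Gamma (a+b+1)) = ln (a+b) + ln (Gamma (a+b))" using ln_mult_pos[OF p(2) p(1)] by simp
    thus ?thesis by simp
  qed
  finally show ?thesis using b by (simp add: field_simps)
qed

lemma lnGamma_lower:
  fixes c b :: real assumes c: "c > 1" and b: "b > 0"
  shows "b * ln (c - 1) \<le> ln (Gamma (c + b)) - ln (Gamma c)"
proof -
  let ?f = "ln \<circ> Gamma :: real \<Rightarrow> real"
  have "(?f c - ?f (c - 1)) / (c - (c - 1)) \<le> (?f (c+b) - ?f c) / ((c+b) - c)"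
    by (rule slope_mono[OF log_convex_Gamma_real]) (use c b in auto)
  also have "?f c - ?f (c - 1) = ln (c - 1)"
  proof -
    have p: "Gamma (c-1) > 0" "c - 1 > 0" using c by auto
    have "Gamma (c-1+1) = (c-1) * Gamma (c-1)" using p(2) by (intro Gamma_plus1_real)
    hence "ln (Gamma c) = ln (c-1) + ln (Gamma (c-1))" using ln_mult_pos[OF p(2) p(1)] by simp
    thus ?thesis by simp
  qed
  finally show ?thesis using b by (simp add: field_simps)
qed

lemma Gamma_ratio_bound:
  fixes a c b :: real assumes a: "a > 0" and c: "c > 1" and b: "b > 0"
  shows "Gamma (a + b) / Gamma a * (Gamma c / Gamma (c + b)) \<le> ((a + b) / (c - 1)) powr b"
proof -
  have pos: "Gamma a > 0" "Gamma c > 0" "Gamma (a+b) > 0" "Gamma (c+b) > 0" using a b c by auto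
  have "ln (Gamma (a + b) / Gamma a * (Gamma c / Gamma (c + b)))
      = (ln (Gamma (a + b)) - ln (Gamma a)) - (ln (Gamma (c+b)) - ln (Gamma c))"
    using pos by (simp add: ln_mult ln_div)
  also have "\<dots> \<le> b * ln (a + b) - b * ln (c - 1)"
    using lnGamma_upper[OF a b] lnGamma_lower[OF c b] by linarith
  also have "\<dots> = ln (((a + b) / (c - 1)) powr b)"
    using a b c by (simp add: ln_powr ln_div algebra_simps)
  finally show ?thesis
    using pos a b c by (subst (asm) ln_le_cancel_iff) auto
qed


definition gq :: "real \<Rightarrow> nat \<Rightarrow> real" where
  "gq \<beta> j = Gamma (real j - \<beta>) / Gamma (real j)"

lemma Gamma_nat_real: "Gamma (real j + 1) = fact j"
  using Gamma_fact[of j] by (simp add: add.commute)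

lemma choose_Beta:
  fixes \<beta> :: real and k n :: nat
  assumes kb: "real k > \<beta>" and b: "\<beta> > 0" and kn: "k \<le> n"
  shows "real (n choose k) * Beta (real k - \<beta>) (real n + 1 - real k)
     = Gamma (real n + 1) / Gamma (real n + 1 - \<beta>) * (gq \<beta> k - gq \<beta> (Suc k)) / \<beta>"
proof -
  have k1: "k \<ge> 1" using kb b by (cases k) auto
  have e1: "Gamma (real n + 1 - real k) = fact (n - k)"
    using Gamma_nat_real[of "n-k"] kn by (simp add: of_nat_diff algebra_simps)
  have e2: "Gamma (real n + 1) = fact n" by (rule Gamma_nat_real)
  have e3: "Gamma (real k) = fact (k - 1)"
    using Gamma_nat_real[of "k-1"] k1 by (simp add: of_nat_diff)
  have e4: "Gamma (real (Suc k)) = fact k"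
    using Gamma_nat_real[of k] by (simp add: add.commute)
  have e5: "Gamma (real (Suc k) - \<beta>) = (real k - \<beta>) * Gamma (real k - \<beta>)"
  proof -
    have "real (Suc k) - \<beta> = (real k - \<beta>) + 1" by simp
    thus ?thesis using Gamma_plus1_real[of "real k - \<beta>"] kb by (metis diff_gt_0_iff_gt)
  qed
  have e6: "fact k = real k * fact (k - 1)"
    using k1 fact_reduce[of k] by simp
  have e7: "real (n choose k) = fact n / (fact k * fact (n - k))"
    using binomial_fact[OF kn] by simp
  have e8: "real k - \<beta> + (real n + 1 - real k) = real n + 1 - \<beta>" by simp
  have pG: "Gamma (real n + 1 - \<beta>) > 0" "Gamma (real k - \<beta>) > 0"
    using kb kn b by auto
  have pf: "(fact (k-1) :: real) > 0" "(fact (n-k) :: real) > 0" "(fact n :: real) > 0" by auto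
  show ?thesis
    unfolding gq_def Beta_def e1 e2 e3 e4 e5 e7 e8 e6
    using pG pf b k1 by (simp add: field_simps)
qed

lemma telescope:
  fixes g :: "nat \<Rightarrow> real"
  assumes "m \<le> Suc n"
  shows "(\<Sum>k = m..n. g k - g (Suc k)) = g m - g (Suc n)"
  using assms
proof (induction n)
  case 0 then show ?case by (cases m) auto
next
  case (Suc n)
  show ?case
  proof (cases "m = Suc (Suc n)")
    case True then show ?thesis by simp
  next
    case False
    then have "m \<le> Suc n" using Suc.prems by simp
    then show ?thesis using Suc.IH by (simp add: sum.cl_ivl_Suc)
  qed
qed


lemma ln_powr_le:
  fixes x \<beta> :: real assumes x: "0 < x" "x < 1" and b: "\<beta> > 1"
  shows "ln (1 / x) powr (\<beta> - 1) \<le> x powr (1 - \<beta>)"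
proof -
  have "0 \<le> ln (1/x)" using x by simp
  moreover have "ln (1/x) \<le> 1/x" using ln_le_minus_one[of "1/x"] x by simp
  ultimately have "ln (1/x) powr (\<beta> - 1) \<le> (1/x) powr (\<beta> - 1)"
    using b by (intro powr_mono2) auto
  also have "(1/x) powr (\<beta> - 1) = x powr (1 - \<beta>)"
    using x by (simp add: powr_divide powr_minus_divide[symmetric] powr_minus)
  finally show ?thesis .
qed

lemma Lambda_le_density:
  fixes \<Lambda> :: "real measure" and \<beta> C2 :: real
  assumes sets_\<Lambda>: "sets \<Lambda> = sets borel"
    and supp: "emeasure \<Lambda> (- {0..1}) = 0"
    and \<beta>: "\<beta> > 1" and C2: "C2 > 0"
    and upper: "\<And>A. A \<in> sets borel \<Longrightarrow> A \<subseteq> {0..1} \<Longrightarrow>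
        emeasure \<Lambda> A
          \<le> ennreal C2 * (\<integral>\<^sup>+ x \<in> A \<inter> {0<..<1}. ennreal (ln (1 / x) powr (\<beta> - 1)) \<partial>lborel)"
  shows "\<Lambda> \<le> density lborel (\<lambda>x. ennreal (C2 * indicator {0<..<1} x * x powr (1 - \<beta>)))"
    (is "_ \<le> ?N")
proof -
  have sN: "sets ?N = sets borel" by simp
  have spN: "space \<Lambda> = space ?N"
    using sets_eq_imp_space_eq[of \<Lambda> ?N] sets_\<Lambda> by simp
  have le: "emeasure \<Lambda> A \<le> emeasure ?N A" for A
  proof (cases "A \<in> sets borel")
    case False
    then show ?thesis using sets_\<Lambda> by (simp add: emeasure_notin_sets)
  next
    case A: True
    have null: "- {0..1} \<in> null_sets \<Lambda>"
      using supp sets_\<Lambda> by (auto simp: null_sets_def)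
    have "emeasure \<Lambda> A = emeasure \<Lambda> (A - (- {0..1}))"
      using emeasure_Diff_null_set[OF null, of A] A sets_\<Lambda> by simp
    also have "A - (- {0..1}) = A \<inter> {0..1}" by auto
    also have "emeasure \<Lambda> (A \<inter> {0..1})
        \<le> ennreal C2 * (\<integral>\<^sup>+ x \<in> (A \<inter> {0..1}) \<inter> {0<..<1}. ennreal (ln (1 / x) powr (\<beta> - 1)) \<partial>lborel)"
      using A by (intro upper) auto
    also have "\<dots> = (\<integral>\<^sup>+ x. ennreal C2 * (ennreal (ln (1 / x) powr (\<beta> - 1)) * indicator ((A \<inter> {0..1}) \<inter> {0<..<1}) x) \<partial>lborel)"
      using A by (subst nn_integral_cmult) auto
    also have "\<dots> \<le> (\<integral>\<^sup>+ x. ennreal (C2 * indicator {0<..<1} x * x powr (1 - \<beta>)) * indicator A x \<partial>lborel)"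
    proof (intro nn_integral_mono)
      fix x
      show "ennreal C2 * (ennreal (ln (1 / x) powr (\<beta> - 1)) * indicator ((A \<inter> {0..1}) \<inter> {0<..<1}) x)
          \<le> ennreal (C2 * indicator {0<..<1} x * x powr (1 - \<beta>)) * indicator A x"
      proof (cases "x \<in> A \<and> 0 < x \<and> x < 1")
        case True
        then have "ln (1 / x) powr (\<beta> - 1) \<le> x powr (1 - \<beta>)" using ln_powr_le \<beta> by auto
        then show ?thesis using True C2
          by (simp add: indicator_def ennreal_mult[symmetric] ennreal_leI)
      next
        case False
        then show ?thesis by (auto simp: indicator_def)
      qed
    qed
    also have "\<dots> = emeasure ?N A"
      using A by (subst emeasure_density) auto
    finally show ?thesis .
  qed
  show ?thesis
    unfolding le_measure_iff using spN sets_\<Lambda> le by (auto simp: le_fun_def)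
qed


lemma lam_bound:
  fixes \<Lambda> :: "real measure" and \<beta> C2 :: real and n k :: nat
  assumes sets_\<Lambda>: "sets \<Lambda> = sets borel"
    and le: "\<Lambda> \<le> density lborel (\<lambda>x. ennreal (C2 * indicator {0<..<1} x * x powr (1 - \<beta>)))"
    and \<beta>: "\<beta> > 1" and C2: "C2 > 0" and kb: "real k > \<beta>" and kn: "k \<le> n"
  shows "lam \<Lambda> n k \<le> C2 * Beta (real k - \<beta>) (real n + 1 - real k)"
proof -
  define a where "a = real k - \<beta>"
  define b where "b = real n + 1 - real k"
  have a: "a > 0" and b: "b > 0" using kb kn by (auto simp: a_def b_def)
  have k2: "k \<ge> 2" using kb \<beta> by linarith
  define f where "f = (\<lambda>x::real. indicator {0..1} x *\<^sub>R (x ^ (k - 2) * (1 - x) ^ (n - k)))"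
  define N where "N = density lborel (\<lambda>x. ennreal (C2 * indicator {0<..<1} x * x powr (1 - \<beta>)))"
  define h where "h = (\<lambda>x::real. C2 * (x powr (a - 1) * (1 - x) powr (b - 1)))"
  have fm: "f \<in> borel_measurable \<Lambda>"
  proof -
    have "f \<in> borel_measurable borel" unfolding f_def by measurable
    thus ?thesis unfolding measurable_cong_sets[OF sets_\<Lambda> refl] .
  qed
  have fnn: "f x \<ge> 0" for x unfolding f_def by (auto simp: indicator_def)
  have "lam \<Lambda> n k = integral\<^sup>L \<Lambda> f"
    unfolding lam_def set_lebesgue_integral_def f_def ..
  also have "\<dots> = enn2real (\<integral>\<^sup>+ x. ennreal (f x) \<partial>\<Lambda>)"
    using fm fnn by (intro integral_eq_nn_integral) auto
  finally have lamf: "lam \<Lambda> n k = enn2real (\<integral>\<^sup>+ x. ennreal (f x) \<partial>\<Lambda>)" .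
  have "(\<integral>\<^sup>+ x. ennreal (f x) \<partial>\<Lambda>) \<le> (\<integral>\<^sup>+ x. ennreal (f x) \<partial>N)"
    using le sets_\<Lambda> unfolding N_def by (intro nn_integral_mono_measure) auto
  also have "\<dots> = (\<integral>\<^sup>+ x. ennreal (C2 * indicator {0<..<1} x * x powr (1 - \<beta>)) * ennreal (f x) \<partial>lborel)"
    unfolding N_def f_def by (subst nn_integral_density) auto
  also have "\<dots> = (\<integral>\<^sup>+ x. ennreal (indicator {0<..<1} x * h x) \<partial>lborel)"
  proof (intro nn_integral_cong)
    fix x :: real
    show "ennreal (C2 * indicator {0<..<1} x * x powr (1 - \<beta>)) * ennreal (f x) = ennreal (indicator {0<..<1} x * h x)"
    proof (cases "0 < x \<and> x < 1")
      case True
      have e1: "x ^ (k - 2) = x powr (real k - 2)"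
        using True k2 by (simp add: powr_realpow[symmetric] of_nat_diff)
      have e2: "(1 - x) ^ (n - k) = (1 - x) powr (b - 1)"
        using True kn by (simp add: powr_realpow[symmetric] of_nat_diff b_def)
      have e3: "x powr (1 - \<beta>) * x powr (real k - 2) = x powr (a - 1)"
        using True by (simp add: powr_add[symmetric] a_def)
      have "C2 * indicator {0<..<1} x * x powr (1 - \<beta>) * f x = indicator {0<..<1} x * h x"
        using True unfolding f_def h_def e1 e2 by (simp add: e3[symmetric] mult_ac)
      moreover have "C2 * indicator {0<..<1} x * x powr (1 - \<beta>) \<ge> 0" using C2 by simp
      ultimately show ?thesis using fnn[of x] by (metis ennreal_mult'')
    next
      case False
      then show ?thesis by (auto simp: indicator_def f_def)
    qed
  qed
  also have "\<dots> = ennreal (C2 * Beta a b)"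
  proof (rule nn_integral_has_integral_lebesgue)
    show "0 \<le> h x" if "x \<in> {0<..<1}" for x using that C2 unfolding h_def by simp
    have "((\<lambda>t. t powr (a - 1) * (1 - t) powr (b - 1)) has_integral Beta a b) {0<..<1}"
      using has_integral_Beta_real[OF a b] by (simp add: has_integral_Icc_iff_Ioo)
    then show "(h has_integral C2 * Beta a b) {0<..<1}"
      unfolding h_def by (rule has_integral_mult_right)
  qed
  finally have le2: "(\<integral>\<^sup>+ x. ennreal (f x) \<partial>\<Lambda>) \<le> ennreal (C2 * Beta a b)" .
  have "enn2real (\<integral>\<^sup>+ x. ennreal (f x) \<partial>\<Lambda>) \<le> enn2real (ennreal (C2 * Beta a b))"
    using le2 by (intro enn2real_mono) auto
  also have "\<dots> = C2 * Beta a b"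
    using C2 a b by (intro enn2real_ennreal) (auto simp: Beta_def)
  finally show ?thesis using lamf by (simp add: a_def b_def)
qed

lemma lim_aux:
  fixes \<delta> \<beta> :: real assumes "\<delta> > 0"
  shows "((\<lambda>n::nat. ((real n + 1) / (\<delta> * real n - \<beta> - 1)) powr \<beta>) \<longlongrightarrow> inverse \<delta> powr \<beta>) sequentially"
  using assms by real_asymp

theorem proposition3p7:
  fixes \<Lambda> :: "real measure" and \<beta> C1 C2 \<delta> :: real
  assumes sets_\<Lambda>: "sets \<Lambda> = sets borel"
    and fin: "finite_measure \<Lambda>"
    and supp: "emeasure \<Lambda> (- {0..1}) = 0"
    and \<beta>: "\<beta> > 1" and C1: "C1 > 0" and C2: "C2 > 0"
    and lower: "\<And>A. A \<in> sets borel \<Longrightarrow> A \<subseteq> {0..1} \<Longrightarrow>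
        ennreal C1 * (\<integral>\<^sup>+ x \<in> A \<inter> {0<..<1}. ennreal (ln (1 / x) powr (\<beta> - 1)) \<partial>lborel)
          \<le> emeasure \<Lambda> A"
    and upper: "\<And>A. A \<in> sets borel \<Longrightarrow> A \<subseteq> {0..1} \<Longrightarrow>
        emeasure \<Lambda> A
          \<le> ennreal C2 * (\<integral>\<^sup>+ x \<in> A \<inter> {0<..<1}. ennreal (ln (1 / x) powr (\<beta> - 1)) \<partial>lborel)"
    and \<delta>: "0 < \<delta>" "\<delta> < 1"
  shows "\<exists>K. \<forall>\<^sub>F n in sequentially.
           (\<Sum>k = nat \<lfloor>\<delta> * real n\<rfloor> + 1..n. real (n choose k) * lam \<Lambda> n k)
             \<le> C2 / \<beta> * \<delta> powr (- \<beta>) + K / real n"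
proof (intro exI[of _ 0])
  have le: "\<Lambda> \<le> density lborel (\<lambda>x. ennreal (C2 * indicator {0<..<1} x * x powr (1 - \<beta>)))"
    by (rule Lambda_le_density[OF sets_\<Lambda> supp \<beta> C2 upper])
  have dinv: "inverse \<delta> powr \<beta> = \<delta> powr (- \<beta>)"
    using \<delta> by (simp add: powr_minus inverse_powr)
  have E2: "\<forall>\<^sub>F n in sequentially. ((real n + 1) / (\<delta> * real n - \<beta> - 1)) powr \<beta> < \<delta> powr (- \<beta>) + 1"
    using order_tendstoD(2)[OF lim_aux[OF \<delta>(1), of \<beta>], of "inverse \<delta> powr \<beta> + 1"] dinv by simp
  have E1: "\<forall>\<^sub>F n in sequentially. \<delta> * real n > \<beta> + 1"
    using \<delta> by real_asymp
  show "\<forall>\<^sub>F n in sequentially.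
           (\<Sum>k = nat \<lfloor>\<delta> * real n\<rfloor> + 1..n. real (n choose k) * lam \<Lambda> n k)
             \<le> C2 / \<beta> * \<delta> powr (- \<beta>) + 0 / real n"
    using E1 E2
  proof eventually_elim
    case (elim n)
    define m where "m = nat \<lfloor>\<delta> * real n\<rfloor> + 1"
    have mgt: "real m > \<delta> * real n"
    proof -
      have "real (nat \<lfloor>\<delta> * real n\<rfloor>) = of_int \<lfloor>\<delta> * real n\<rfloor>" using \<delta> by simp
      thus ?thesis unfolding m_def by linarith
    qed
    have pos: "C2 / \<beta> * \<delta> powr (- \<beta>) \<ge> 0" using C2 \<beta> \<delta> by simp
    show ?case
    proof (cases "m \<le> n")
      case False
      then show ?thesis using pos unfolding m_def[symmetric] by simp
    next
      case True
      have mb: "real m > \<beta> + 1" using mgt elim(1) by linarith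
      have kb: "real k > \<beta>" if "k \<in> {m..n}" for k using that mb by auto
      define Q where "Q = Gamma (real n + 1) / Gamma (real n + 1 - \<beta>)"
      have "(\<Sum>k = m..n. real (n choose k) * lam \<Lambda> n k)
          \<le> (\<Sum>k = m..n. real (n choose k) * (C2 * Beta (real k - \<beta>) (real n + 1 - real k)))"
        by (intro sum_mono mult_left_mono lam_bound[OF sets_\<Lambda> le \<beta> C2]) (use kb in auto)
      also have "\<dots> = (\<Sum>k = m..n. C2 * (Q / \<beta>) * (gq \<beta> k - gq \<beta> (Suc k)))"
      proof (intro sum.cong refl)
        fix k assume k: "k \<in> {m..n}"
        have "real (n choose k) * Beta (real k - \<beta>) (real n + 1 - real k) = Q * (gq \<beta> k - gq \<beta> (Suc k)) / \<beta>"
          unfolding Q_def by (rule choose_Beta) (use kb[OF k] \<beta> k in auto)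
        then show "real (n choose k) * (C2 * Beta (real k - \<beta>) (real n + 1 - real k)) = C2 * (Q / \<beta>) * (gq \<beta> k - gq \<beta> (Suc k))"
          by (simp add: mult_ac)
      qed
      also have "\<dots> = C2 * (Q / \<beta>) * (gq \<beta> m - gq \<beta> (Suc n))"
        using True by (subst sum_distrib_left[symmetric], subst telescope) auto
      also have "\<dots> = C2 / \<beta> * (Q * gq \<beta> m - Q * gq \<beta> (Suc n))"
        by (simp add: algebra_simps)
      finally have S: "(\<Sum>k = m..n. real (n choose k) * lam \<Lambda> n k) \<le> C2 / \<beta> * (Q * gq \<beta> m - Q * gq \<beta> (Suc n))" .
      have Qs: "Q * gq \<beta> (Suc n) = 1"
      proof -
        have "real n + 1 - \<beta> > 0" using mb True by linarith
        hence "Gamma (real n + 1 - \<beta>) > 0" "Gamma (real n + 1) > 0" by auto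
        moreover have "Gamma (1 + real n) \<noteq> 0" using Gamma_nat_real[of n] by (simp add: add.commute)
        ultimately show ?thesis unfolding Q_def gq_def by (simp add: add.commute)
      qed
      have "Q * gq \<beta> m \<le> ((real n + 1) / (real m - \<beta> - 1)) powr \<beta>"
        using Gamma_ratio_bound[of "real n + 1 - \<beta>" "real m - \<beta>" \<beta>] mb True \<beta>
        unfolding Q_def gq_def by (simp add: algebra_simps)
      also have "\<dots> \<le> ((real n + 1) / (\<delta> * real n - \<beta> - 1)) powr \<beta>"
        using mgt elim(1) \<beta> by (intro powr_mono2 divide_left_mono mult_pos_pos) auto
      also have "\<dots> \<le> \<delta> powr (- \<beta>) + 1" using elim(2) by simp
      finally have Qm: "Q * gq \<beta> m \<le> \<delta> powr (- \<beta>) + 1" .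
      have "C2 / \<beta> * (Q * gq \<beta> m - Q * gq \<beta> (Suc n)) \<le> C2 / \<beta> * (\<delta> powr (- \<beta>))"
        using Qm Qs C2 \<beta> by (intro mult_left_mono) auto
      with S show ?thesis unfolding m_def by simp
    qed
  qed
qed

end
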